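(* Let $\Delta\in\{0,1,-1\}^{m\times m}$, regarded as a matrix over $\mathbb Q$, be a connection matrix with column/row partition $J_0,\dots,J_b$ which is totally unimodular. Let $\Delta^m$ be the last matrix produced by the Incremental Sweeping Algorithm applied to $\Delta$. Then for every position $(i,j)$ marked as a primary pivot, $\Delta^m_{ij}\in\{1,-1\}$.
   Context: A matrix is totally unimodular (TU) if every square submatrix has determinant in $\{0,1,-1\}$. $U^{pq}$ is the $m\times m$ matrix whose only nonzero entry is a $1$ in position $(p,q)$. Superscripts on matrices are indices, not powers. A connection matrix (over a field $\mathbb F$, here $\mathbb Q$) is a matrix $\Delta\in\mathbb F^{m\times m}$ together with a partition $\{1,\dots,m\}=J_0\sqcup\cdots\sqcup J_b$ (the column/row partition; the $J_k$ need not consist of consecutive integers) such that $\Delta$ is upper triangular, $\Delta\Delta=0$, and $\Delta_{ij}=0$ unless $i<j$ and $(i,j)\in\bigcup_{k=1}^bJ_{k-1}\times J_k$. For $1\le r\le m-1$ the $r$-th diagonal is $\{(j-r,j):r<j\le m\}$. Incremental Sweeping Algorithm (ISA) applied to a connection matrix $\Delta$: set $\Delta^0=\Delta^1=\Delta$. For $r=1,\dots,m-1$ in turn: (Markup) for every position $(j-r,j)$ on the $r$-th diagonal with $\Delta^r_{j-r,j}\ne0$ such that no position in column $j$ was marked as a primary pivot at an earlier iteration: if some position $(j-r,p)$ of row $j-r$ was marked as a primary pivot at an earlier iteration, mark $(j-r,j)$ as a change-of-basis pivot of iteration $r$; otherwise mark $(j-r,j)$ permanently as a primary pivot. (Update)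 Let $T^r=I-\sum \frac{\Delta^r_{j-r,j}}{\Delta^r_{j-r,p}}U^{pj}$, the sum running over all change-of-basis pivots $(j-r,j)$ of iteration $r$, where $(j-r,p)$ is the primary pivot position in row $j-r$; set $\Delta^{r+1}=(T^r)^{-1}\Delta^rT^r$. *)

theory Defs
  imports "Jordan_Normal_Form.Determinant" "Jordan_Normal_Form.DL_Submatrix"
begin

text \<open>Matrices are JNF matrices over rat; indices are 0-based, i.e. the paper's
  index k corresponds to k-1 here.\<close>

definition totally_unimodular :: "rat mat \<Rightarrow> bool" where
  "totally_unimodular A \<longleftrightarrow>
     (\<forall>I J. I \<subseteq> {0..<dim_row A} \<longrightarrow> J \<subseteq> {0..<dim_col A} \<longrightarrow> card I = card J \<longrightarrow>
        det (submatrix A I J) \<in> {0, 1, -1})"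

definition unit_mat :: "nat \<Rightarrow> nat \<Rightarrow> nat \<Rightarrow> rat mat" where
  "unit_mat m p q = mat m m (\<lambda>(a,c). if a = p \<and> c = q then 1 else 0)"

definition connection_matrix :: "nat \<Rightarrow> rat mat \<Rightarrow> nat \<Rightarrow> (nat \<Rightarrow> nat set) \<Rightarrow> bool" where
  "connection_matrix m D b J \<longleftrightarrow>
     D \<in> carrier_mat m m \<and>
     (\<Union>k\<in>{0..b}. J k) = {0..<m} \<and>
     (\<forall>k\<in>{0..b}. \<forall>k'\<in>{0..b}. k \<noteq> k' \<longrightarrow> J k \<inter> J k' = {}) \<and>
     (\<forall>i<m. \<forall>j<m. j < i \<longrightarrow> D $$ (i,j) = 0) \<and>
     D * D = 0\<^sub>m m m \<and>
     (\<forall>i<m. \<forall>j<m. D $$ (i,j) \<noteq> 0 \<longrightarrow>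
        i < j \<and> (\<exists>k\<in>{1..b}. i \<in> J (k - 1) \<and> j \<in> J k))"

text \<open>One iteration r of the ISA. State: (current matrix D^r, set of primary pivots
  marked at iterations before r). The r-th diagonal is {(i, i+r). i + r < m}.\<close>

definition isa_candidates :: "nat \<Rightarrow> nat \<Rightarrow> rat mat \<times> (nat \<times> nat) set \<Rightarrow> (nat \<times> nat) set" where
  "isa_candidates m r st =
     {(i, j). j < m \<and> r \<le> j \<and> i = j - r \<and> fst st $$ (i, j) \<noteq> 0 \<and>
              \<not> (\<exists>i'. (i', j) \<in> snd st)}"

definition isa_cob :: "nat \<Rightarrow> nat \<Rightarrow> rat mat \<times> (nat \<times> nat) set \<Rightarrow> (nat \<times> nat) set" where
  "isa_cob m r st = {(i, j) \<in> isa_candidates m r st. \<exists>p. (i, p) \<in> snd st}"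

definition isa_prim_col :: "(nat \<times> nat) set \<Rightarrow> nat \<Rightarrow> nat" where
  "isa_prim_col P i = (THE p. (i, p) \<in> P)"

definition isa_T :: "nat \<Rightarrow> nat \<Rightarrow> rat mat \<times> (nat \<times> nat) set \<Rightarrow> rat mat" where
  "isa_T m r st =
     mat m m (\<lambda>(a, c). (if a = c then 1 else 0) -
        (\<Sum>(i, j)\<in>isa_cob m r st.
           fst st $$ (i, j) / fst st $$ (i, isa_prim_col (snd st) i)
           * unit_mat m (isa_prim_col (snd st) i) j $$ (a, c)))"

definition mat_inv :: "rat mat \<Rightarrow> rat mat" where
  "mat_inv T = (SOME B. inverts_mat T B \<and> inverts_mat B T)"

definition isa_step :: "nat \<Rightarrow> nat \<Rightarrow> rat mat \<times> (nat \<times> nat) set \<Rightarrow> rat mat \<times> (nat \<times> nat) set" where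
  "isa_step m r st =
     (let T = isa_T m r st
      in (mat_inv T * fst st * T,
          snd st \<union> (isa_candidates m r st - isa_cob m r st)))"

text \<open>isa_state m D n = (D^{n+1}, primary pivots marked in iterations 1..n).\<close>
primrec isa_state :: "nat \<Rightarrow> rat mat \<Rightarrow> nat \<Rightarrow> rat mat \<times> (nat \<times> nat) set" where
  "isa_state m D 0 = (D, {})"
| "isa_state m D (Suc n) = isa_step m (Suc n) (isa_state m D n)"

definition isa_final_matrix :: "nat \<Rightarrow> rat mat \<Rightarrow> rat mat" where
  "isa_final_matrix m D = fst (isa_state m D (m - 1))"

definition isa_primary_pivots :: "nat \<Rightarrow> rat mat \<Rightarrow> (nat \<times> nat) set" where
  "isa_primary_pivots m D = snd (isa_state m D (m - 1))"

end

theory Submission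
  imports Defs
begin
declare pick.simps[simp del]

lemma card_lt_m: "I \<subseteq> {..<m} \<Longrightarrow> {i. i < m \<and> i \<in> I} = I" by auto

lemma pick_delete:
  assumes fin: "finite I" and u: "u < card I" and w: "w < card I - 1"
  shows "pick (I - {pick I u}) w = pick I (if w < u then w else Suc w)"
proof -
  define w' where "w' = (if w < u then w else Suc w)"
  have w'lt: "w' < card I" using u w unfolding w'_def by auto
  let ?y = "pick I u" and ?x = "pick I w'"
  have xI: "?x \<in> I" using pick_in_set w'lt by auto
  have xy: "?x \<noteq> ?y"
  proof (cases "w < u")
    case True
    then have "w' < u" unfolding w'_def by simp
    then show ?thesis using pick_mono[of u I w'] u by simp
  next
    case False
    then have "u < w'" unfolding w'_def by simp
    then show ?thesis using pick_mono[of w' I u] w'lt by simp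
  qed
  have cx: "card {a\<in>I. a < ?x} = w'" using card_pick w'lt by auto
  have "card {a\<in>I - {?y}. a < ?x} = w"
  proof (cases "w < u")
    case True
    then have "?x < ?y" using pick_mono[of u I w'] u unfolding w'_def by auto
    then have "{a\<in>I - {?y}. a < ?x} = {a\<in>I. a < ?x}" by auto
    then show ?thesis using cx True unfolding w'_def by auto
  next
    case False
    then have "?y < ?x" using pick_mono[of w' I u] w'lt unfolding w'_def by auto
    then have eq: "{a\<in>I - {?y}. a < ?x} = {a\<in>I. a < ?x} - {?y}" by auto
    have "?y \<in> {a\<in>I. a < ?x}" using \<open>?y < ?x\<close> pick_in_set u by auto
    then have "card ({a\<in>I. a < ?x} - {?y}) = w' - 1" using cx fin by (simp add: card_Diff_singleton)
    then show ?thesis using eq False unfolding w'_def by auto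
  qed
  then have "pick (I - {?y}) (card {a\<in>I - {?y}. a < ?x}) = ?x"
    using pick_card_in_set[of ?x "I - {?y}"] xI xy by auto
  then show ?thesis using \<open>card {a\<in>I - {?y}. a < ?x} = w\<close> unfolding w'_def by auto
qed

lemma submatrix_dims:
  assumes "A \<in> carrier_mat m m" "I \<subseteq> {..<m}" "J \<subseteq> {..<m}"
  shows "dim_row (submatrix A I J) = card I" "dim_col (submatrix A I J) = card J"
  using assms by (auto simp: dim_submatrix card_lt_m)

lemma submatrix_idx:
  assumes "A \<in> carrier_mat m m" "I \<subseteq> {..<m}" "J \<subseteq> {..<m}" "u < card I" "v < card J"
  shows "submatrix A I J $$ (u,v) = A $$ (pick I u, pick J v)"
  using assms by (intro submatrix_index) (auto simp: card_lt_m)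

lemma mat_delete_submatrix:
  assumes A: "A \<in> carrier_mat m m" and I: "I \<subseteq> {..<m}" and J: "J \<subseteq> {..<m}"
    and u: "u < card I" and v: "v < card J"
  shows "mat_delete (submatrix A I J) u v = submatrix A (I - {pick I u}) (J - {pick J v})"
proof -
  have fI: "finite I" "finite J" using I J finite_subset by auto
  have I': "I - {pick I u} \<subseteq> {..<m}" "J - {pick J v} \<subseteq> {..<m}" using I J by auto
  have cI: "card (I - {pick I u}) = card I - 1" using pick_in_set u fI by (simp add: card_Diff_singleton)
  have cJ: "card (J - {pick J v}) = card J - 1" using pick_in_set v fI by (simp add: card_Diff_singleton)
  show ?thesis
  proof (rule eq_matI)
    show "dim_row (mat_delete (submatrix A I J) u v) = dim_row (submatrix A (I - {pick I u}) (J - {pick J v}))"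
      using submatrix_dims[OF A I J] submatrix_dims[OF A I'] cI by simp
    show "dim_col (mat_delete (submatrix A I J) u v) = dim_col (submatrix A (I - {pick I u}) (J - {pick J v}))"
      using submatrix_dims[OF A I J] submatrix_dims[OF A I'] cJ by simp
    fix i j assume ij: "i < dim_row (submatrix A (I - {pick I u}) (J - {pick J v}))"
       "j < dim_col (submatrix A (I - {pick I u}) (J - {pick J v}))"
    then have i: "i < card I - 1" and j: "j < card J - 1"
      using submatrix_dims[OF A I'] cI cJ by auto
    have "mat_delete (submatrix A I J) u v $$ (i,j) =
        submatrix A I J $$ (if i < u then i else Suc i, if j < v then j else Suc j)"
      unfolding mat_delete_def using i j submatrix_dims[OF A I J] by auto
    also have "\<dots> = A $$ (pick I (if i < u then i else Suc i), pick J (if j < v then j else Suc j))"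
      using i j by (intro submatrix_idx[OF A I J]) auto
    also have "\<dots> = A $$ (pick (I - {pick I u}) i, pick (J - {pick J v}) j)"
      using pick_delete[OF fI(1) u i] pick_delete[OF fI(2) v j] by simp
    also have "\<dots> = submatrix A (I - {pick I u}) (J - {pick J v}) $$ (i,j)"
      using i j cI cJ by (intro submatrix_idx[OF A I', symmetric]) auto
    finally show "mat_delete (submatrix A I J) u v $$ (i,j) = submatrix A (I - {pick I u}) (J - {pick J v}) $$ (i,j)" .
  qed
qed

lemma det_0x0: "A \<in> carrier_mat 0 0 \<Longrightarrow> det A = 1"
proof -
  assume "A \<in> carrier_mat 0 0"
  then have "A = 1\<^sub>m 0" by (intro eq_matI) auto
  then show ?thesis by simp
qed

lemma det_pivot_prod:
  fixes M :: "rat mat"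
  assumes M: "M \<in> carrier_mat m m"
    and fin: "finite Q" and Qm: "Q \<subseteq> {..<m} \<times> {..<m}"
    and rowu: "\<forall>(a,c)\<in>Q. \<forall>(a',c')\<in>Q. a = a' \<longrightarrow> c = c'"
    and colu: "\<forall>(a,c)\<in>Q. \<forall>(a',c')\<in>Q. c = c' \<longrightarrow> a = a'"
    and below: "\<forall>(a,c)\<in>Q. \<forall>(a',c')\<in>Q. a < a' \<longrightarrow> M $$ (a',c) = 0"
  shows "\<bar>det (submatrix M (fst`Q) (snd`Q))\<bar> = (\<Prod>(a,c)\<in>Q. \<bar>M $$ (a,c)\<bar>)"
  using fin Qm rowu colu below
proof (induction "card Q" arbitrary: Q)
  case 0
  then have Q: "Q = {}" by auto
  have "submatrix M (fst`Q) (snd`Q) \<in> carrier_mat 0 0"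
    using submatrix_dims[OF M, of "fst`Q" "snd`Q"] Q by auto
  then show ?case using Q det_0x0 by simp
next
  case (Suc n Q)
  define I where "I = fst`Q"
  define J where "J = snd`Q"
  have Qne: "Q \<noteq> {}" using Suc.hyps(2) by auto
  have Im: "I \<subseteq> {..<m}" and Jm: "J \<subseteq> {..<m}" using Suc.prems(2) unfolding I_def J_def by auto
  have finI: "finite I" "finite J" using Suc.prems(1) unfolding I_def J_def by auto
  have injf: "inj_on fst Q" using Suc.prems(3) unfolding inj_on_def by fastforce
  have injs: "inj_on snd Q" using Suc.prems(4) unfolding inj_on_def by fastforce
  have cI: "card I = card Q" unfolding I_def using card_image[OF injf] .
  have cJ: "card J = card Q" unfolding J_def using card_image[OF injs] .
  define a0 where "a0 = Min I"
  have a0I: "a0 \<in> I" unfolding a0_def using finI Qne I_def by auto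
  then obtain c0 where a0c0: "(a0,c0) \<in> Q" unfolding I_def by auto
  have c0J: "c0 \<in> J" using a0c0 unfolding J_def by force
  have a0min: "\<And>a. a \<in> I \<Longrightarrow> a0 \<le> a" unfolding a0_def using finI by auto
  have e0: "{a\<in>I. a < a0} = {}" using a0min by force
  have pick0: "pick I 0 = a0"
  proof -
    have "pick I (card {a\<in>I. a < a0}) = a0" by (rule pick_card_in_set[OF a0I])
    then show ?thesis unfolding e0 by simp
  qed
  define v where "v = card {a\<in>J. a < c0}"
  have pickv: "pick J v = c0" unfolding v_def using pick_card_in_set[OF c0J] .
  have "{a\<in>J. a < c0} \<subset> J" using c0J by auto
  then have vlt: "v < card J" unfolding v_def using finI by (simp add: psubset_card_mono)
  define S where "S = submatrix M I J"
  have Sc: "S \<in> carrier_mat (card Q) (card Q)"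
    unfolding S_def using submatrix_dims[OF M Im Jm] cI cJ by auto
  have k0: "0 < card Q" using Suc.hyps(2) by simp
  have vlt': "v < card Q" using vlt cJ by simp
  have lap: "det S = (\<Sum>w<card Q. S $$ (w,v) * cofactor S w v)"
    using laplace_expansion_column[OF Sc vlt'] .
  have zero: "S $$ (w,v) = 0" if w: "w < card Q" "w \<noteq> 0" for w
  proof -
    have "S $$ (w,v) = M $$ (pick I w, c0)"
      unfolding S_def using submatrix_idx[OF M Im Jm, of w v] w cI vlt pickv by simp
    moreover have "pick I w \<in> I" using pick_in_set w cI by simp
    moreover have "a0 < pick I w" using pick_mono[of w I 0] w cI pick0 by simp
    ultimately show ?thesis using Suc.prems(5) a0c0 unfolding I_def by fastforce
  qed
  have "det S = S $$ (0,v) * cofactor S 0 v"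
  proof -
    have "(\<Sum>w<card Q. S $$ (w,v) * cofactor S w v) = S $$ (0,v) * cofactor S 0 v
        + (\<Sum>w\<in>{..<card Q} - {0}. S $$ (w,v) * cofactor S w v)"
      using k0 by (subst sum.remove[of _ 0]) auto
    also have "(\<Sum>w\<in>{..<card Q} - {0}. S $$ (w,v) * cofactor S w v) = 0"
      using zero by (intro sum.neutral) auto
    finally show ?thesis using lap by simp
  qed
  moreover have "S $$ (0,v) = M $$ (a0,c0)"
    unfolding S_def using submatrix_idx[OF M Im Jm, of 0 v] k0 cI vlt pickv pick0 by simp
  moreover have md: "mat_delete S 0 v = submatrix M (I - {a0}) (J - {c0})"
    unfolding S_def using mat_delete_submatrix[OF M Im Jm, of 0 v] k0 cI vlt pickv pick0 by simp
  ultimately have detS: "\<bar>det S\<bar> = \<bar>M $$ (a0,c0)\<bar> * \<bar>det (submatrix M (I - {a0}) (J - {c0}))\<bar>"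
    unfolding cofactor_def by (simp add: abs_mult power_abs)
  define Q' where "Q' = Q - {(a0,c0)}"
  have fQ': "fst`Q' = I - {a0}"
  proof
    show "fst ` Q' \<subseteq> I - {a0}"
    proof
      fix a assume "a \<in> fst`Q'"
      then obtain c where "(a,c) \<in> Q'" by force
      then have ac: "(a,c) \<in> Q" "(a,c) \<noteq> (a0,c0)" unfolding Q'_def by auto
      then have "a \<noteq> a0" using Suc.prems(3) a0c0 by fastforce
      then show "a \<in> I - {a0}" using ac unfolding I_def by force
    qed
    show "I - {a0} \<subseteq> fst ` Q'" unfolding I_def Q'_def by force
  qed
  have sQ': "snd`Q' = J - {c0}"
  proof
    show "snd ` Q' \<subseteq> J - {c0}"
    proof
      fix c assume "c \<in> snd`Q'"
      then obtain a where "(a,c) \<in> Q'" by force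
      then have ac: "(a,c) \<in> Q" "(a,c) \<noteq> (a0,c0)" unfolding Q'_def by auto
      then have "c \<noteq> c0" using Suc.prems(4) a0c0 by fastforce
      then show "c \<in> J - {c0}" using ac unfolding J_def by force
    qed
    show "J - {c0} \<subseteq> snd ` Q'" unfolding J_def Q'_def by force
  qed
  have IH: "\<bar>det (submatrix M (fst`Q') (snd`Q'))\<bar> = (\<Prod>(a,c)\<in>Q'. \<bar>M $$ (a,c)\<bar>)"
    apply (rule Suc.hyps(1))
    using Suc.hyps(2) Suc.prems a0c0 unfolding Q'_def by (auto simp: card_Diff_singleton)
  have "(\<Prod>(a,c)\<in>Q. \<bar>M $$ (a,c)\<bar>) = \<bar>M $$ (a0,c0)\<bar> * (\<Prod>(a,c)\<in>Q'. \<bar>M $$ (a,c)\<bar>)"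
    unfolding Q'_def using Suc.prems(1) a0c0 by (subst prod.remove[of _ "(a0,c0)"]) auto
  then show ?case using detS IH fQ' sQ' unfolding S_def I_def J_def by simp
qed


lemma pick_image:
  assumes "finite J"
  shows "bij_betw (pick J) {..<card J} J"
proof (rule bij_betw_imageI)
  show "inj_on (pick J) {..<card J}"
  proof (rule inj_onI)
    fix u v assume uv: "u \<in> {..<card J}" "v \<in> {..<card J}" "pick J u = pick J v"
    show "u = v"
    proof (rule ccontr)
      assume "u \<noteq> v"
      then have "u < v \<or> v < u" by auto
      then show False using pick_mono[of v J u] pick_mono[of u J v] uv by auto
    qed
  qed
  show "pick J ` {..<card J} = J"
  proof
    show "pick J ` {..<card J} \<subseteq> J" using pick_in_set by auto
    show "J \<subseteq> pick J ` {..<card J}"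
    proof
      fix k assume k: "k \<in> J"
      have "{a\<in>J. a < k} \<subset> J" using k by auto
      then have "card {a\<in>J. a < k} < card J" using assms by (simp add: psubset_card_mono)
      moreover have "pick J (card {a\<in>J. a < k}) = k" using pick_card_in_set[OF k] .
      ultimately show "k \<in> pick J ` {..<card J}" by force
    qed
  qed
qed

locale stp =
  fixes m n :: nat and A :: "rat mat" and P :: "(nat \<times> nat) set"
  assumes A: "A \<in> carrier_mat m m"
    and upper: "\<And>x y. x < m \<Longrightarrow> y < m \<Longrightarrow> y \<le> x \<Longrightarrow> A $$ (x,y) = 0"
    and Pb: "\<And>a c. (a,c) \<in> P \<Longrightarrow> a < c \<and> c < m \<and> c - a \<le> n"
    and rowu: "\<And>a c c'. (a,c) \<in> P \<Longrightarrow> (a,c') \<in> P \<Longrightarrow> c = c'"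
    and colu: "\<And>a a' c. (a,c) \<in> P \<Longrightarrow> (a',c) \<in> P \<Longrightarrow> a = a'"
    and nz: "\<And>a c. (a,c) \<in> P \<Longrightarrow> A $$ (a,c) \<noteq> 0"
    and low: "\<And>x y. x < y \<Longrightarrow> y < m \<Longrightarrow> y - x \<le> n \<Longrightarrow> (\<And>a. (a,y) \<in> P \<Longrightarrow> a < x) \<Longrightarrow> A $$ (x,y) = 0"
    and sq: "A * A = 0\<^sub>m m m"
begin

definition "Cand = isa_candidates m (Suc n) (A,P)"
definition "Cob = isa_cob m (Suc n) (A,P)"
definition "New = Cand - Cob"
definition "pc = isa_prim_col P"
definition "cobc y \<longleftrightarrow> Suc n \<le> y \<and> (y - Suc n, y) \<in> Cob"
definition "cf y = A $$ (y - Suc n, y) / A $$ (y - Suc n, pc (y - Suc n))"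
definition "N = mat m m (\<lambda>(a,c). if cobc c \<and> a = pc (c - Suc n) then cf c else 0)"

lemma Cand_iff: "(i,j) \<in> Cand \<longleftrightarrow> j < m \<and> Suc n \<le> j \<and> i = j - Suc n \<and> A $$ (i,j) \<noteq> 0 \<and> \<not>(\<exists>i'. (i',j) \<in> P)"
  unfolding Cand_def isa_candidates_def by auto

lemma Cob_iff: "(i,j) \<in> Cob \<longleftrightarrow> (i,j) \<in> Cand \<and> (\<exists>p. (i,p) \<in> P)"
  unfolding Cob_def Cand_def isa_cob_def by auto

lemma pc_eq: "(i,p) \<in> P \<Longrightarrow> pc i = p"
  unfolding pc_def isa_prim_col_def using rowu by (intro the_equality) auto

lemma cobcD:
  assumes "cobc y"
  shows "y < m" "Suc n \<le> y" "(y - Suc n, pc (y - Suc n)) \<in> P" "A $$ (y - Suc n, y) \<noteq> 0"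
    "\<And>a. (a,y) \<notin> P" "y - Suc n < pc (y - Suc n)" "pc (y - Suc n) < y"
    "A $$ (y - Suc n, pc (y - Suc n)) \<noteq> 0"
proof -
  have c: "(y - Suc n, y) \<in> Cand" "\<exists>p. (y - Suc n, p) \<in> P" "Suc n \<le> y"
    using assms unfolding cobc_def Cob_iff by auto
  then show "y < m" "Suc n \<le> y" "A $$ (y - Suc n, y) \<noteq> 0" "\<And>a. (a,y) \<notin> P"
    unfolding Cand_iff by auto
  from c obtain p where p: "(y - Suc n, p) \<in> P" by auto
  then show pP: "(y - Suc n, pc (y - Suc n)) \<in> P" using pc_eq by simp
  show "y - Suc n < pc (y - Suc n)" using Pb[OF pP] by simp
  show "pc (y - Suc n) < y" using Pb[OF pP] c(3) by linarith
  show "A $$ (y - Suc n, pc (y - Suc n)) \<noteq> 0" using nz[OF pP] .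
qed

lemma Cob_sub: "Cob \<subseteq> {..<m} \<times> {..<m}"
  by (auto simp: Cob_iff Cand_iff)

lemma fin_Cob: "finite Cob"
  using Cob_sub finite_subset by blast

lemma Cob_cobc: "(i,j) \<in> Cob \<Longrightarrow> cobc j \<and> i = j - Suc n"
  unfolding cobc_def using Cob_iff Cand_iff by auto

lemma N_carrier: "N \<in> carrier_mat m m" unfolding N_def by simp

lemma N_idx: "a < m \<Longrightarrow> c < m \<Longrightarrow> N $$ (a,c) = (if cobc c \<and> a = pc (c - Suc n) then cf c else 0)"
  unfolding N_def by simp

lemma T_eq: "isa_T m (Suc n) (A,P) = 1\<^sub>m m - N"
proof (rule eq_matI)
  fix a c assume ac: "a < dim_row (1\<^sub>m m - N)" "c < dim_col (1\<^sub>m m - N)"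
  then have am: "a < m" and cm: "c < m" using N_carrier by auto
  define f where "f = (\<lambda>(i,j). A $$ (i, j) / A $$ (i, isa_prim_col P i) * unit_mat m (isa_prim_col P i) j $$ (a, c))"
  have fz: "f (i,j) = (if a = pc i \<and> c = j then A $$ (i,j) / A $$ (i, pc i) else 0)" for i j
    unfolding f_def unit_mat_def pc_def using am cm by auto
  have sumeq: "(\<Sum>x\<in>Cob. f x) = N $$ (a,c)"
  proof (cases "cobc c \<and> a = pc (c - Suc n)")
    case True
    then have inC: "(c - Suc n, c) \<in> Cob" unfolding cobc_def by auto
    have "(\<Sum>x\<in>Cob. f x) = f (c - Suc n, c) + (\<Sum>x\<in>Cob - {(c - Suc n, c)}. f x)"
      using fin_Cob inC by (subst sum.remove[of _ "(c - Suc n, c)"]) auto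
    also have "(\<Sum>x\<in>Cob - {(c - Suc n, c)}. f x) = 0"
    proof (intro sum.neutral ballI)
      fix x assume x: "x \<in> Cob - {(c - Suc n, c)}"
      obtain i j where x': "x = (i,j)" by (cases x)
      have "i = j - Suc n" using x x' Cob_cobc by auto
      then have "c \<noteq> j" using x x' by auto
      then show "f x = 0" unfolding x' fz by auto
    qed
    finally show ?thesis using True fz N_idx[OF am cm] cf_def by simp
  next
    case False
    have "(\<Sum>x\<in>Cob. f x) = 0"
    proof (intro sum.neutral ballI)
      fix x assume x: "x \<in> Cob"
      obtain i j where x': "x = (i,j)" by (cases x)
      have "cobc j" "i = j - Suc n" using x x' Cob_cobc by auto
      then show "f x = 0" unfolding x' fz using False by auto
    qed
    then show ?thesis using False N_idx[OF am cm] by auto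
  qed
  show "isa_T m (Suc n) (A,P) $$ (a,c) = (1\<^sub>m m - N) $$ (a,c)"
    unfolding isa_T_def using am cm N_carrier sumeq[unfolded f_def]
    by (simp add: Cob_def case_prod_beta')
qed (auto simp: isa_T_def N_def)

lemma mult_idx:
  assumes "X \<in> carrier_mat m m" "Y \<in> carrier_mat m m" "i < m" "j < m"
  shows "(X * Y) $$ (i,j) = (\<Sum>k<m. X $$ (i,k) * Y $$ (k,j))"
  using assms by (simp add: scalar_prod_def lessThan_atLeast0)

lemma sum_single:
  assumes "finite S" "k \<in> S" "\<And>k'. k' \<in> S \<Longrightarrow> k' \<noteq> k \<Longrightarrow> f k' = 0"
  shows "sum f S = f k"
proof -
  have "sum f S = f k + sum f (S - {k})" using assms by (subst sum.remove[of _ k]) auto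
  also have "sum f (S - {k}) = 0" using assms by (intro sum.neutral) auto
  finally show ?thesis by simp
qed

lemma NN: "N * N = 0\<^sub>m m m"
proof (rule eq_matI)
  fix a c assume ac: "a < dim_row (0\<^sub>m m m :: rat mat)" "c < dim_col (0\<^sub>m m m :: rat mat)"
  then have am: "a < m" "c < m" by auto
  have "(N * N) $$ (a,c) = (\<Sum>k<m. N $$ (a,k) * N $$ (k,c))"
    using mult_idx[OF N_carrier N_carrier am] .
  also have "\<dots> = 0"
  proof (intro sum.neutral ballI)
    fix k assume k: "k \<in> {..<m}"
    show "N $$ (a,k) * N $$ (k,c) = 0"
    proof (rule ccontr)
      assume "N $$ (a,k) * N $$ (k,c) \<noteq> 0"
      then have "N $$ (a,k) \<noteq> 0" "N $$ (k,c) \<noteq> 0" by auto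
      then have "cobc k" "cobc c \<and> k = pc (c - Suc n)" using N_idx am k by (auto split: if_splits)
      then show False using cobcD(3)[of c] cobcD(5)[of k] by auto
    qed
  qed
  finally show "(N * N) $$ (a,c) = (0\<^sub>m m m :: rat mat) $$ (a,c)" using am by simp
qed (auto simp: N_def)

lemma TT': "(1\<^sub>m m - N) * (1\<^sub>m m + N) = 1\<^sub>m m"
proof -
  have "(1\<^sub>m m - N) * (1\<^sub>m m + N) = 1\<^sub>m m * (1\<^sub>m m + N) - N * (1\<^sub>m m + N)"
    using N_carrier by (intro minus_mult_distrib_mat) auto
  also have "N * (1\<^sub>m m + N) = N * 1\<^sub>m m + N * N"
    using N_carrier by (intro mult_add_distrib_mat) auto
  finally show ?thesis using NN N_carrier by (intro eq_matI) auto
qed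

lemma T'T: "(1\<^sub>m m + N) * (1\<^sub>m m - N) = 1\<^sub>m m"
proof -
  have "(1\<^sub>m m + N) * (1\<^sub>m m - N) = 1\<^sub>m m * (1\<^sub>m m - N) + N * (1\<^sub>m m - N)"
    using N_carrier by (intro add_mult_distrib_mat) auto
  also have "N * (1\<^sub>m m - N) = N * 1\<^sub>m m - N * N"
    using N_carrier by (intro mult_minus_distrib_mat) auto
  finally show ?thesis using NN N_carrier by (intro eq_matI) auto
qed

lemma inv_eq: "mat_inv (1\<^sub>m m - N) = 1\<^sub>m m + N"
proof -
  let ?T = "1\<^sub>m m - N" and ?T' = "1\<^sub>m m + N"
  have ex: "inverts_mat ?T ?T' \<and> inverts_mat ?T' ?T"
    unfolding inverts_mat_def using TT' T'T N_carrier by auto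
  define B where "B = mat_inv ?T"
  have Bp: "inverts_mat ?T B \<and> inverts_mat B ?T"
    unfolding B_def mat_inv_def by (rule someI_ex, rule exI, rule ex)
  then have TB: "?T * B = 1\<^sub>m m" and BT: "B * ?T = 1\<^sub>m (dim_row B)"
    unfolding inverts_mat_def using N_carrier by auto
  have "dim_col (?T * B) = m" using TB by simp
  then have dc: "dim_col B = m" by simp
  have "dim_col (B * ?T) = dim_row B" using BT by simp
  then have dr: "dim_row B = m" using N_carrier by simp
  have Bc: "B \<in> carrier_mat m m" using dc dr by auto
  have "B = B * (?T * ?T')" using TT' Bc by simp
  also have "\<dots> = (B * ?T) * ?T'" using Bc N_carrier by (intro assoc_mult_mat[symmetric]) auto
  also have "\<dots> = ?T'" using BT dr N_carrier by simp
  finally show ?thesis unfolding B_def .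
qed

definition "B = A * (1\<^sub>m m - N)"
definition "Anew = (1\<^sub>m m + N) * A * (1\<^sub>m m - N)"

lemma step_eq: "isa_step m (Suc n) (A,P) = (Anew, P \<union> New)"
  unfolding isa_step_def Let_def T_eq inv_eq Anew_def New_def Cand_def Cob_def by simp

lemma B_carrier: "B \<in> carrier_mat m m" unfolding B_def using A N_carrier by auto
lemma Anew_carrier: "Anew \<in> carrier_mat m m" unfolding Anew_def using A N_carrier by auto

lemma Anew_B: "Anew = (1\<^sub>m m + N) * B"
  unfolding Anew_def B_def using A N_carrier by (intro assoc_mult_mat) auto

lemma B_idx:
  assumes xm: "x < m" and ym: "y < m"
  shows "B $$ (x,y) = A $$ (x,y) - (if cobc y then A $$ (x, pc (y - Suc n)) * cf y else 0)"
proof -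
  have T: "1\<^sub>m m - N \<in> carrier_mat m m" using N_carrier by auto
  have "B $$ (x,y) = (\<Sum>k<m. A $$ (x,k) * (1\<^sub>m m - N) $$ (k,y))"
    unfolding B_def using mult_idx[OF A T xm ym] .
  also have "\<dots> = (\<Sum>k<m. A $$ (x,k) * (1\<^sub>m m) $$ (k,y)) - (\<Sum>k<m. A $$ (x,k) * N $$ (k,y))"
    using ym N_carrier by (simp add: sum_subtractf algebra_simps)
  also have "(\<Sum>k<m. A $$ (x,k) * (1\<^sub>m m) $$ (k,y)) = A $$ (x,y)"
    using ym by (subst sum_single[of _ y]) auto
  also have "(\<Sum>k<m. A $$ (x,k) * N $$ (k,y)) = (if cobc y then A $$ (x, pc (y - Suc n)) * cf y else 0)"
  proof (cases "cobc y")
    case True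
    have pm: "pc (y - Suc n) < m" using cobcD(7)[OF True] ym by simp
    show ?thesis using True pm ym
      by (subst sum_single[of _ "pc (y - Suc n)"]) (auto simp: N_idx)
  next
    case False
    have "\<forall>k\<in>{..<m}. A $$ (x,k) * N $$ (k,y) = 0" using False ym by (auto simp: N_idx)
    then have "(\<Sum>k<m. A $$ (x,k) * N $$ (k,y)) = 0" by (intro sum.neutral) blast
    then show ?thesis using False by simp
  qed
  finally show ?thesis .
qed

lemma cobc_uniq: "cobc k \<Longrightarrow> cobc k' \<Longrightarrow> pc (k - Suc n) = pc (k' - Suc n) \<Longrightarrow> k = k'"
  using cobcD(2,3)[of k] cobcD(2,3)[of k'] colu by (metis le_add_diff_inverse2)

lemma Anew_idx1:
  assumes k: "cobc k" and x: "x = pc (k - Suc n)" and ym: "y < m"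
  shows "Anew $$ (x,y) = B $$ (x,y) + cf k * B $$ (k,y)"
proof -
  have km: "k < m" using cobcD(1)[OF k] .
  have xm: "x < m" using cobcD(7)[OF k] km x by simp
  have T: "1\<^sub>m m + N \<in> carrier_mat m m" using N_carrier by auto
  have "Anew $$ (x,y) = (\<Sum>j<m. (1\<^sub>m m + N) $$ (x,j) * B $$ (j,y))"
    unfolding Anew_B using mult_idx[OF T B_carrier xm ym] .
  also have "\<dots> = (\<Sum>j<m. (1\<^sub>m m) $$ (x,j) * B $$ (j,y)) + (\<Sum>j<m. N $$ (x,j) * B $$ (j,y))"
    using xm N_carrier by (simp add: sum.distrib algebra_simps)
  also have "(\<Sum>j<m. (1\<^sub>m m) $$ (x,j) * B $$ (j,y)) = B $$ (x,y)"
    using xm by (subst sum_single[of _ x]) auto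
  also have "(\<Sum>j<m. N $$ (x,j) * B $$ (j,y)) = cf k * B $$ (k,y)"
  proof (subst sum_single[of _ k])
    fix k' assume k': "k' \<in> {..<m}" "k' \<noteq> k"
    show "N $$ (x,k') * B $$ (k',y) = 0"
    proof (cases "cobc k' \<and> x = pc (k' - Suc n)")
      case True
      then show ?thesis using cobc_uniq[OF k] x k' by auto
    qed (use xm k' N_idx in auto)
  qed (use km xm k x N_idx in auto)
  finally show ?thesis .
qed

lemma Anew_idx2:
  assumes xm: "x < m" and ym: "y < m" and nk: "\<And>k. cobc k \<Longrightarrow> x \<noteq> pc (k - Suc n)"
  shows "Anew $$ (x,y) = B $$ (x,y)"
proof -
  have T: "1\<^sub>m m + N \<in> carrier_mat m m" using N_carrier by auto
  have "Anew $$ (x,y) = (\<Sum>j<m. (1\<^sub>m m + N) $$ (x,j) * B $$ (j,y))"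
    unfolding Anew_B using mult_idx[OF T B_carrier xm ym] .
  also have "\<dots> = (\<Sum>j<m. (1\<^sub>m m) $$ (x,j) * B $$ (j,y)) + (\<Sum>j<m. N $$ (x,j) * B $$ (j,y))"
    using xm N_carrier by (simp add: sum.distrib algebra_simps)
  also have "(\<Sum>j<m. (1\<^sub>m m) $$ (x,j) * B $$ (j,y)) = B $$ (x,y)"
    using xm by (subst sum_single[of _ x]) auto
  also have "(\<Sum>j<m. N $$ (x,j) * B $$ (j,y)) = 0"
    using xm nk by (intro sum.neutral) (auto simp: N_idx)
  finally show ?thesis by simp
qed


lemma B_upper: "x < m \<Longrightarrow> y < m \<Longrightarrow> y \<le> x \<Longrightarrow> B $$ (x,y) = 0"
proof -
  assume xy: "x < m" "y < m" "y \<le> x"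
  show ?thesis
  proof (cases "cobc y")
    case True
    then have "pc (y - Suc n) < y" by (rule cobcD)
    then show ?thesis using B_idx xy upper by auto
  qed (use B_idx xy upper in auto)
qed

lemma New_iff: "(a,c) \<in> New \<longleftrightarrow> (a,c) \<in> Cand \<and> \<not>(\<exists>p. (a,p) \<in> P)"
  by (auto simp: New_def Cob_iff)

lemma NewD: "(a,c) \<in> New \<Longrightarrow> a < c \<and> c < m \<and> c - a = Suc n \<and> a = c - Suc n \<and> A $$ (a,c) \<noteq> 0 \<and> (\<forall>a'. (a',c) \<notin> P) \<and> (\<forall>p. (a,p) \<notin> P)"
  unfolding New_iff Cand_iff by auto

lemma colu': "(a,c) \<in> P \<union> New \<Longrightarrow> (a',c) \<in> P \<union> New \<Longrightarrow> a = a'"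
  using colu NewD by blast

lemma rowu': "(a,c) \<in> P \<union> New \<Longrightarrow> (a,c') \<in> P \<union> New \<Longrightarrow> c = c'"
proof -
  assume h: "(a,c) \<in> P \<union> New" "(a,c') \<in> P \<union> New"
  show "c = c'"
  proof (cases "(a,c) \<in> P")
    case True
    then show ?thesis using h rowu NewD by blast
  next
    case False
    then have "(a,c) \<in> New" using h by auto
    then have "(a,c') \<in> New" using h NewD by blast
    then show ?thesis using NewD[of a c] NewD[of a c'] \<open>(a,c) \<in> New\<close> by auto
  qed
qed

lemma Pb': "(a,c) \<in> P \<union> New \<Longrightarrow> a < c \<and> c < m \<and> c - a \<le> Suc n"
  using Pb NewD by fastforce

lemma Bzero:
  assumes xy: "x < y" "y < m" "y - x \<le> Suc n" and H: "\<And>a. (a,y) \<in> P \<union> New \<Longrightarrow> a < x"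
  shows "B $$ (x,y) = 0"
proof (cases "cobc y")
  case True
  define i0 where "i0 = y - Suc n"
  define p0 where "p0 = pc i0"
  have ip: "(i0,p0) \<in> P" "i0 < p0" "p0 < y" "A $$ (i0,p0) \<noteq> 0" "\<And>a. (a,y) \<notin> P"
    using cobcD[OF True] unfolding i0_def p0_def by auto
  have ry: "Suc n \<le> y" using cobcD(2)[OF True] .
  have Bxy: "B $$ (x,y) = A $$ (x,y) - A $$ (x,p0) * cf y"
    using B_idx[of x y] xy True unfolding p0_def i0_def by auto
  have "i0 \<le> x" using xy ry unfolding i0_def by linarith
  then consider "x = i0" | "i0 < x" by linarith
  then show ?thesis
  proof cases
    case 1
    then show ?thesis using Bxy ip(4) unfolding cf_def p0_def i0_def by simp
  next
    case 2
    have "A $$ (x,y) = 0"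
      using xy 2 ry ip(5) unfolding i0_def by (intro low) auto
    moreover have "A $$ (x,p0) = 0"
    proof (cases "p0 \<le> x")
      case True
      then show ?thesis using upper xy ip by auto
    next
      case False
      have "p0 - i0 \<le> n" using Pb[OF ip(1)] by simp
      then have d: "p0 - x \<le> n" using 2 by linarith
      have "\<And>a. (a,p0) \<in> P \<Longrightarrow> a < x" using colu ip(1) 2 by blast
      moreover have "x < p0" "p0 < m" using False ip xy by auto
      ultimately show ?thesis using d by (intro low) auto
    qed
    ultimately show ?thesis using Bxy by simp
  qed
next
  case False
  then have Bxy: "B $$ (x,y) = A $$ (x,y)" using B_idx[of x y] xy by auto
  show ?thesis
  proof (cases "y - x \<le> n")
    case True
    have "A $$ (x,y) = 0" using True xy H by (intro low) auto
    then show ?thesis using Bxy by simp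
  next
    case nle: False
    then have d: "y - x = Suc n" using xy by auto
    show ?thesis
    proof (rule ccontr)
      assume nz0: "B $$ (x,y) \<noteq> 0"
      have nop: "\<not>(\<exists>a. (a,y) \<in> P)"
      proof
        assume "\<exists>a. (a,y) \<in> P"
        then obtain a where a: "(a,y) \<in> P" by auto
        then have "a < x" using H by auto
        moreover have "y - a \<le> n" using Pb[OF a] by auto
        ultimately show False using d xy by linarith
      qed
      have cand: "(x,y) \<in> Cand" unfolding Cand_iff using xy d nz0 Bxy nop by auto
      show False
      proof (cases "\<exists>p. (x,p) \<in> P")
        case True
        then have "(x,y) \<in> Cob" using cand Cob_iff by auto
        then have "cobc y" using Cob_cobc by auto
        then show False using False by simp
      next
        case False
        then have "(x,y) \<in> New" using cand New_iff by auto
        then show False using H[of x] by auto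
      qed
    qed
  qed
qed

lemma Anew_upper: "x < m \<Longrightarrow> y < m \<Longrightarrow> y \<le> x \<Longrightarrow> Anew $$ (x,y) = 0"
proof -
  assume xy: "x < m" "y < m" "y \<le> x"
  show ?thesis
  proof (cases "\<exists>k. cobc k \<and> x = pc (k - Suc n)")
    case True
    then obtain k where k: "cobc k" "x = pc (k - Suc n)" by auto
    have "x < k" "k < m" using cobcD(7)[OF k(1)] cobcD(1)[OF k(1)] k(2) by auto
    then show ?thesis using Anew_idx1[OF k xy(2)] B_upper xy by auto
  next
    case False
    then show ?thesis using Anew_idx2[OF xy(1,2)] B_upper xy by auto
  qed
qed

lemma Anew_low:
  assumes xy: "x < y" "y < m" "y - x \<le> Suc n" and H: "\<And>a. (a,y) \<in> P \<union> New \<Longrightarrow> a < x"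
  shows "Anew $$ (x,y) = 0"
proof (cases "\<exists>k. cobc k \<and> x = pc (k - Suc n)")
  case True
  then obtain k where k: "cobc k" "x = pc (k - Suc n)" by auto
  have xk: "x < k" "k < m" using cobcD(7)[OF k(1)] cobcD(1)[OF k(1)] k(2) by auto
  have "B $$ (k,y) = 0"
  proof (cases "y \<le> k")
    case True
    then show ?thesis using B_upper xk xy by auto
  next
    case False
    have "a < k" if "(a,y) \<in> P \<union> New" for a
    proof -
      have "a < x" using H that .
      then show "a < k" using xk(1) by simp
    qed
    then show ?thesis using False xk xy by (intro Bzero) auto
  qed
  then show ?thesis using Anew_idx1[OF k xy(2)] Bzero[OF xy H] by simp
next
  case False
  then show ?thesis using Anew_idx2[of x y] xy Bzero[OF xy H] by auto
qed

lemma Anew_stable: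
  assumes ac: "(a,c) \<in> P \<union> New"
  shows "Anew $$ (a,c) = A $$ (a,c)"
proof -
  have acb: "a < c" "c < m" "c - a \<le> Suc n" using Pb'[OF ac] by auto
  have ncob: "\<not> cobc c"
  proof
    assume cc: "cobc c"
    show False
    proof (cases "(a,c) \<in> P")
      case True
      then show False using cobcD(5)[OF cc] by auto
    next
      case False
      then have "(a,c) \<in> New" using ac by auto
      then have "(a,c) \<in> Cob" using cc NewD unfolding cobc_def by auto
      then show False using \<open>(a,c) \<in> New\<close> unfolding New_def by auto
    qed
  qed
  have Bac: "B $$ (a,c) = A $$ (a,c)" using B_idx[of a c] ncob acb by auto
  show ?thesis
  proof (cases "\<exists>k. cobc k \<and> a = pc (k - Suc n)")
    case True
    then obtain k where k: "cobc k" "a = pc (k - Suc n)" by auto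
    have xk: "a < k" "k < m" using cobcD(7)[OF k(1)] cobcD(1)[OF k(1)] k(2) by auto
    have "B $$ (k,c) = 0"
    proof (cases "c \<le> k")
      case True
      then show ?thesis using B_upper xk acb by auto
    next
      case False
      have "\<And>a'. (a',c) \<in> P \<union> New \<Longrightarrow> a' < k" using colu' ac xk by blast
      then show ?thesis using False xk acb by (intro Bzero) auto
    qed
    then show ?thesis using Anew_idx1[OF k acb(2)] Bac by simp
  next
    case False
    then show ?thesis using Anew_idx2[of a c] acb Bac by auto
  qed
qed

lemma Anew_nz: "(a,c) \<in> P \<union> New \<Longrightarrow> Anew $$ (a,c) \<noteq> 0"
  using Anew_stable nz NewD by fastforce

lemma Anew_sq: "Anew * Anew = 0\<^sub>m m m"
proof -
  define T where "T = 1\<^sub>m m - N"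
  define T' where "T' = 1\<^sub>m m + N"
  define X where "X = T' * A"
  have Tc: "T \<in> carrier_mat m m" "T' \<in> carrier_mat m m" unfolding T_def T'_def using N_carrier by auto
  have Xc: "X \<in> carrier_mat m m" unfolding X_def using Tc A by auto
  have An: "Anew = X * T" unfolding Anew_def X_def T_def T'_def ..
  have TX: "T * X = A"
  proof -
    have "T * X = (T * T') * A" unfolding X_def using Tc A by (simp add: assoc_mult_mat)
    then show ?thesis using TT' A unfolding T_def T'_def by simp
  qed
  have XTc: "X * T \<in> carrier_mat m m" using Xc Tc by auto
  have "Anew * Anew = X * (T * (X * T))" unfolding An using assoc_mult_mat[OF Xc Tc(1) XTc] .
  also have "T * (X * T) = A * T" using assoc_mult_mat[OF Tc(1) Xc Tc(1)] TX by simp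
  also have "X * (A * T) = (X * A) * T" using assoc_mult_mat[OF Xc A Tc(1)] by simp
  also have "X * A = T' * (A * A)" unfolding X_def using assoc_mult_mat[OF Tc(2) A A] .
  also have "T' * (A * A) * T = 0\<^sub>m m m" using sq Tc by (simp add: left_mult_zero_mat[OF Tc(1)])
  finally show ?thesis .
qed

lemma det_step:
  assumes I: "I \<subseteq> {..<m}" and J: "J \<subseteq> {..<m}" and cIJ: "card I = card J"
    and rowsI: "\<And>x k. x \<in> I \<Longrightarrow> cobc k \<Longrightarrow> x \<noteq> pc (k - Suc n)"
    and closJ: "\<And>y. y \<in> J \<Longrightarrow> cobc y \<Longrightarrow> pc (y - Suc n) \<in> J"
  shows "det (submatrix Anew I J) = det (submatrix A I J)"
proof -
  define T where "T = 1\<^sub>m m - N"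
  have Tc: "T \<in> carrier_mat m m" unfolding T_def using N_carrier by auto
  have finJ: "finite J" using J finite_subset by auto
  have Tidx: "T $$ (k,y) = (if k = y then 1 else 0) - N $$ (k,y)" if "k < m" "y < m" for k y
    unfolding T_def using that N_carrier by simp
  have S1: "submatrix A I J \<in> carrier_mat (card I) (card J)"
    using submatrix_dims[OF A I J] by auto
  have S2: "submatrix T J J \<in> carrier_mat (card J) (card J)"
    using submatrix_dims[OF Tc J J] by auto
  have eq: "submatrix Anew I J = submatrix A I J * submatrix T J J"
  proof (rule eq_matI)
    fix u v assume uv: "u < dim_row (submatrix A I J * submatrix T J J)" "v < dim_col (submatrix A I J * submatrix T J J)"
    then have u: "u < card I" and v: "v < card J" using S1 S2 by auto
    define x where "x = pick I u"
    define y where "y = pick J v"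
    have xI: "x \<in> I" unfolding x_def using pick_in_set u by simp
    have yJ: "y \<in> J" unfolding y_def using pick_in_set v by simp
    have xm: "x < m" and ym: "y < m" using xI yJ I J by auto
    have "submatrix Anew I J $$ (u,v) = Anew $$ (x,y)"
      unfolding x_def y_def using submatrix_idx[OF Anew_carrier I J u v] .
    also have "\<dots> = B $$ (x,y)" using Anew_idx2[OF xm ym] rowsI xI by auto
    also have "\<dots> = (\<Sum>k<m. A $$ (x,k) * T $$ (k,y))"
      unfolding B_def T_def[symmetric] using mult_idx[OF A Tc xm ym] .
    also have "\<dots> = (\<Sum>k\<in>J. A $$ (x,k) * T $$ (k,y))"
    proof (rule sum.mono_neutral_right)
      show "finite {..<m}" by simp
      show "J \<subseteq> {..<m}" using J .
      show "\<forall>k\<in>{..<m} - J. A $$ (x,k) * T $$ (k,y) = 0"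
      proof
        fix k assume k: "k \<in> {..<m} - J"
        have "k \<noteq> y" using k yJ by auto
        moreover have "N $$ (k,y) = 0"
        proof (rule ccontr)
          assume "N $$ (k,y) \<noteq> 0"
          then have "cobc y \<and> k = pc (y - Suc n)" using N_idx k ym by (auto split: if_splits)
          then show False using closJ yJ k by auto
        qed
        ultimately show "A $$ (x,k) * T $$ (k,y) = 0" using Tidx k ym by auto
      qed
    qed
    also have "\<dots> = (\<Sum>w<card J. A $$ (x, pick J w) * T $$ (pick J w, y))"
      using sum.reindex_bij_betw[OF pick_image[OF finJ], of "\<lambda>k. A $$ (x,k) * T $$ (k,y)"] by simp
    also have "\<dots> = (submatrix A I J * submatrix T J J) $$ (u,v)"
      using S1 S2 u v unfolding x_def y_def
      by (simp add: scalar_prod_def lessThan_atLeast0 submatrix_idx[OF A I J] submatrix_idx[OF Tc J J])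
    finally show "submatrix Anew I J $$ (u,v) = (submatrix A I J * submatrix T J J) $$ (u,v)" .
  next
    show "dim_row (submatrix Anew I J) = dim_row (submatrix A I J * submatrix T J J)"
      using submatrix_dims[OF Anew_carrier I J] S1 by simp
    show "dim_col (submatrix Anew I J) = dim_col (submatrix A I J * submatrix T J J)"
      using submatrix_dims[OF Anew_carrier I J] S2 by simp
  qed
  have ut: "upper_triangular (submatrix T J J)"
  proof
    fix u v assume uv: "v < u" "u < dim_row (submatrix T J J)"
    then have u: "u < card J" and v: "v < card J" using S2 by auto
    have pl: "pick J v < pick J u" using pick_mono[of u J v] u uv by simp
    have pm: "pick J u < m" "pick J v < m" using pick_in_set u v J by auto
    have "N $$ (pick J u, pick J v) = 0"
    proof (rule ccontr)
      assume "N $$ (pick J u, pick J v) \<noteq> 0"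
      then have c: "cobc (pick J v) \<and> pick J u = pc (pick J v - Suc n)" using N_idx pm by (auto split: if_splits)
      then show False using cobcD(7)[of "pick J v"] pl by auto
    qed
    then show "submatrix T J J $$ (u,v) = 0"
      using submatrix_idx[OF Tc J J u v] Tidx pm pl by auto
  qed
  have dT: "det (submatrix T J J) = 1"
  proof -
    have "det (submatrix T J J) = prod_list (diag_mat (submatrix T J J))"
      using det_upper_triangular[OF ut S2] .
    also have "\<dots> = (\<Prod>i = 0 ..< card J. submatrix T J J $$ (i,i))"
      unfolding prod_list_diag_prod using S2 by simp
    also have "\<dots> = 1"
    proof (intro prod.neutral ballI)
      fix i assume i: "i \<in> {0..<card J}"
      have pm: "pick J i < m" using pick_in_set i J by auto
      have "N $$ (pick J i, pick J i) = 0"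
      proof (rule ccontr)
        assume "N $$ (pick J i, pick J i) \<noteq> 0"
        then have c: "cobc (pick J i) \<and> pick J i = pc (pick J i - Suc n)" using N_idx pm by (auto split: if_splits)
        then show False using cobcD(7)[of "pick J i"] by auto
      qed
      then show "submatrix T J J $$ (i,i) = 1" using submatrix_idx[OF Tc J J, of i i] i Tidx pm by auto
    qed
    finally show ?thesis .
  qed
  have "det (submatrix Anew I J) = det (submatrix A I J) * det (submatrix T J J)"
    unfolding eq using S1 S2 cIJ by (intro det_mult) auto
  then show ?thesis using dT by simp
qed

end

lemma stp_base:
  assumes cm: "connection_matrix m D b J"
  shows "stp m 0 D {}"
proof -
  have D: "D \<in> carrier_mat m m" and sq: "D * D = 0\<^sub>m m m"
    and nzD: "\<And>i j. i < m \<Longrightarrow> j < m \<Longrightarrow> D $$ (i,j) \<noteq> 0 \<Longrightarrow> i < j"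
    using cm unfolding connection_matrix_def by auto
  show ?thesis
  proof
    fix x y assume xy: "x < m" "y < m" "y \<le> x"
    show "D $$ (x, y) = 0"
    proof (rule ccontr)
      assume "D $$ (x, y) \<noteq> 0"
      then have "x < y" using nzD xy by blast
      then show False using xy by simp
    qed
  qed (use D sq in auto)
qed

lemma stp_step:
  assumes "stp m n A P"
  shows "isa_step m (Suc n) (A,P) = (stp.Anew m n A P, P \<union> stp.New m n A P)"
    and "stp m (Suc n) (stp.Anew m n A P) (P \<union> stp.New m n A P)"
proof -
  interpret S: stp m n A P by fact
  show "isa_step m (Suc n) (A,P) = (S.Anew, P \<union> S.New)" by (rule S.step_eq)
  show "stp m (Suc n) S.Anew (P \<union> S.New)"
  proof
    show "S.Anew \<in> carrier_mat m m" by (rule S.Anew_carrier)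
    show "\<And>x y. x < m \<Longrightarrow> y < m \<Longrightarrow> y \<le> x \<Longrightarrow> S.Anew $$ (x, y) = 0" by (rule S.Anew_upper)
    show "\<And>a c. (a, c) \<in> P \<union> S.New \<Longrightarrow> a < c \<and> c < m \<and> c - a \<le> Suc n" by (rule S.Pb')
    show "\<And>a c c'. (a, c) \<in> P \<union> S.New \<Longrightarrow> (a, c') \<in> P \<union> S.New \<Longrightarrow> c = c'" by (rule S.rowu')
    show "\<And>a a' c. (a, c) \<in> P \<union> S.New \<Longrightarrow> (a', c) \<in> P \<union> S.New \<Longrightarrow> a = a'" by (rule S.colu')
    show "\<And>a c. (a, c) \<in> P \<union> S.New \<Longrightarrow> S.Anew $$ (a, c) \<noteq> 0" by (rule S.Anew_nz)
    show "\<And>x y. x < y \<Longrightarrow> y < m \<Longrightarrow> y - x \<le> Suc n \<Longrightarrow> (\<And>a. (a, y) \<in> P \<union> S.New \<Longrightarrow> a < x) \<Longrightarrow> S.Anew $$ (x, y) = 0"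
      by (rule S.Anew_low)
    show "S.Anew * S.Anew = 0\<^sub>m m m" by (rule S.Anew_sq)
  qed
qed

lemma stp_all:
  assumes cm: "connection_matrix m D b J"
  shows "stp m n (fst (isa_state m D n)) (snd (isa_state m D n))"
proof (induction n)
  case 0
  then show ?case using stp_base[OF cm] by simp
next
  case (Suc n)
  have e: "isa_state m D n = (fst (isa_state m D n), snd (isa_state m D n))" by simp
  show ?case
    using stp_step[OF Suc.IH] by (subst isa_state.simps(2), subst e, simp)
qed

lemma state_Suc:
  assumes cm: "connection_matrix m D b J"
  shows "isa_state m D (Suc n) = (stp.Anew m n (fst (isa_state m D n)) (snd (isa_state m D n)),
     snd (isa_state m D n) \<union> stp.New m n (fst (isa_state m D n)) (snd (isa_state m D n)))"
proof -
  have e: "isa_state m D n = (fst (isa_state m D n), snd (isa_state m D n))" by simp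
  show ?thesis using stp_step(1)[OF stp_all[OF cm, of n]] by (subst isa_state.simps(2), subst e, simp)
qed

lemma P_char:
  assumes cm: "connection_matrix m D b J" and nK: "n \<le> K"
  shows "snd (isa_state m D n) = {(a,c) \<in> snd (isa_state m D K). c - a \<le> n}"
  using nK
proof (induction K)
  case 0
  then have "n = 0" by simp
  then show ?case using stp.Pb[OF stp_all[OF cm, of 0]] by auto
next
  case (Suc K)
  show ?case
  proof (cases "n = Suc K")
    case True
    then show ?thesis using stp.Pb[OF stp_all[OF cm, of n]] by auto
  next
    case False
    then have nK': "n \<le> K" using Suc.prems by simp
    interpret S: stp m K "fst (isa_state m D K)" "snd (isa_state m D K)" using stp_all[OF cm] .
    have "snd (isa_state m D (Suc K)) = snd (isa_state m D K) \<union> S.New"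
      using state_Suc[OF cm, of K] by simp
    moreover have "\<And>a c. (a,c) \<in> S.New \<Longrightarrow> c - a = Suc K" using S.NewD by auto
    ultimately show ?thesis using Suc.IH[OF nK'] nK' by auto
  qed
qed


lemma mult_idx':
  assumes "X \<in> carrier_mat m m" "Y \<in> carrier_mat m m" "i < m" "j < m"
  shows "(X * Y) $$ (i,j) = (\<Sum>k<m. X $$ (i,k) * Y $$ (k,j))"
  using assms by (simp add: scalar_prod_def lessThan_atLeast0)

lemma final_low:
  assumes cm: "connection_matrix m D b J" and xy: "x < m" "y < m"
    and H: "\<And>a. (a,y) \<in> snd (isa_state m D (m-1)) \<Longrightarrow> a < x"
  shows "fst (isa_state m D (m-1)) $$ (x,y) = 0"
proof -
  interpret S: stp m "m-1" "fst (isa_state m D (m-1))" "snd (isa_state m D (m-1))" using stp_all[OF cm] .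
  show ?thesis
  proof (cases "x < y")
    case True
    have "y - x \<le> m - 1" using xy by linarith
    then show ?thesis using True xy H by (intro S.low) auto
  next
    case False
    then show ?thesis using S.upper xy by auto
  qed
qed

lemma disjoint:
  assumes cm: "connection_matrix m D b J"
    and ac: "(a,c) \<in> snd (isa_state m D (m-1))" and cd: "(c,d) \<in> snd (isa_state m D (m-1))"
  shows False
proof -
  define F where "F = fst (isa_state m D (m-1))"
  define PF where "PF = snd (isa_state m D (m-1))"
  interpret S: stp m "m-1" F PF using stp_all[OF cm] unfolding F_def PF_def .
  have flow: "\<And>x y. x < m \<Longrightarrow> y < m \<Longrightarrow> (\<And>a. (a,y) \<in> PF \<Longrightarrow> a < x) \<Longrightarrow> F $$ (x,y) = 0"
    unfolding F_def PF_def using final_low[OF cm] by blast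
  define Sset where "Sset = {q. q < m \<and> F $$ (q,d) \<noteq> 0 \<and> (\<exists>a'. (a',q) \<in> PF)}"
  have cS: "c \<in> Sset" unfolding Sset_def using S.Pb[OF ac[folded PF_def]] S.nz[OF cd[folded PF_def]] ac PF_def by auto
  define R where "R = {a'. \<exists>q\<in>Sset. (a',q) \<in> PF}"
  have "R \<subseteq> {..<m}"
  proof
    fix x assume "x \<in> R"
    then obtain q where "(x,q) \<in> PF" unfolding R_def by auto
    then show "x \<in> {..<m}" using S.Pb by fastforce
  qed
  then have finR: "finite R" using finite_subset by blast
  have aR: "a \<in> R" unfolding R_def using cS ac PF_def by auto
  define as where "as = Max R"
  have asR: "as \<in> R" unfolding as_def using finR aR by (intro Max_in) auto
  then obtain qs where qs: "qs \<in> Sset" "(as,qs) \<in> PF" unfolding R_def by auto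
  have asmax: "\<And>a'. a' \<in> R \<Longrightarrow> a' \<le> as" unfolding as_def using finR by auto
  have asm: "as < m" "qs < m" "d < m" using S.Pb[OF qs(2)] S.Pb[OF cd[folded PF_def]] by auto
  have "(F * F) $$ (as,d) = 0" using S.sq asm by simp
  moreover have "(F * F) $$ (as,d) = (\<Sum>q<m. F $$ (as,q) * F $$ (q,d))"
    using mult_idx'[OF S.A S.A asm(1) asm(3)] .
  moreover have "(\<Sum>q<m. F $$ (as,q) * F $$ (q,d)) = F $$ (as,qs) * F $$ (qs,d)"
  proof (rule S.sum_single)
    show "finite {..<m}" by simp
    show "qs \<in> {..<m}" using asm by simp
    fix q assume q: "q \<in> {..<m}" "q \<noteq> qs"
    show "F $$ (as,q) * F $$ (q,d) = 0"
    proof (cases "F $$ (q,d) = 0")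
      case False
      show ?thesis
      proof (cases "\<exists>a'. (a',q) \<in> PF")
        case True
        then obtain aq where aq: "(aq,q) \<in> PF" by auto
        then have "q \<in> Sset" unfolding Sset_def using q False by auto
        then have "aq \<in> R" unfolding R_def using aq by auto
        then have "aq \<le> as" using asmax by auto
        moreover have "aq \<noteq> as" using aq qs(2) S.rowu q by blast
        ultimately have "aq < as" by simp
        then have "F $$ (as,q) = 0" using flow[of as q] asm q S.colu aq by blast
        then show ?thesis by simp
      next
        case False
        then have "F $$ (as,q) = 0" using flow[of as q] asm q by blast
        then show ?thesis by simp
      qed
    qed simp
  qed
  moreover have "F $$ (as,qs) \<noteq> 0" using S.nz qs(2) by blast
  moreover have "F $$ (qs,d) \<noteq> 0" using qs(1) unfolding Sset_def by auto
  ultimately show False by simp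
qed


lemma det_inv:
  assumes cm: "connection_matrix m D b J"
    and QP: "Q \<subseteq> snd (isa_state m D (m-1))"
    and down: "\<And>a c a' c'. (a,c) \<in> Q \<Longrightarrow> (a',c') \<in> snd (isa_state m D (m-1)) \<Longrightarrow> a < a' \<Longrightarrow> c' < c \<Longrightarrow> (a',c') \<in> Q"
  shows "n \<le> m - 1 \<Longrightarrow> det (submatrix (fst (isa_state m D n)) (fst`Q) (snd`Q)) = det (submatrix D (fst`Q) (snd`Q))"
proof (induction n)
  case 0
  then show ?case by simp
next
  case (Suc n)
  define PF where "PF = snd (isa_state m D (m-1))"
  interpret F: stp m "m-1" "fst (isa_state m D (m-1))" PF using stp_all[OF cm] unfolding PF_def .
  interpret S: stp m n "fst (isa_state m D n)" "snd (isa_state m D n)" using stp_all[OF cm] .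
  have QP': "Q \<subseteq> PF" using QP unfolding PF_def .
  have Pn: "snd (isa_state m D n) = {(a,c) \<in> PF. c - a \<le> n}"
    unfolding PF_def by (rule P_char[OF cm]) (use Suc.prems in simp)
  have PSn: "snd (isa_state m D (Suc n)) = {(a,c) \<in> PF. c - a \<le> Suc n}"
    unfolding PF_def by (rule P_char[OF cm Suc.prems])
  have PSn': "snd (isa_state m D (Suc n)) = snd (isa_state m D n) \<union> S.New"
    using state_Suc[OF cm, of n] by simp
  have An: "fst (isa_state m D (Suc n)) = S.Anew" using state_Suc[OF cm, of n] by simp
  have Im: "fst`Q \<subseteq> {..<m}" using QP' F.Pb by fastforce
  have Jm: "snd`Q \<subseteq> {..<m}" using QP' F.Pb by fastforce
  have injf: "inj_on fst Q" using QP' F.rowu unfolding inj_on_def by (metis prod.collapse subsetD)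
  have injs: "inj_on snd Q" using QP' F.colu unfolding inj_on_def by (metis prod.collapse subsetD)
  have cIJ: "card (fst`Q) = card (snd`Q)" using card_image[OF injf] card_image[OF injs] by simp
  have "det (submatrix S.Anew (fst`Q) (snd`Q)) = det (submatrix (fst (isa_state m D n)) (fst`Q) (snd`Q))"
  proof (rule S.det_step[OF Im Jm cIJ])
    fix x k assume x: "x \<in> fst`Q" and k: "S.cobc k"
    show "x \<noteq> S.pc (k - Suc n)"
    proof
      assume xe: "x = S.pc (k - Suc n)"
      have "(k - Suc n, x) \<in> PF" using S.cobcD(3)[OF k] xe Pn by auto
      moreover obtain c where "(x,c) \<in> Q" using x by force
      ultimately show False using disjoint[OF cm] QP' unfolding PF_def by blast
    qed
  next
    fix y assume y: "y \<in> snd`Q" and cy: "S.cobc y"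
    obtain a where ay: "(a,y) \<in> Q" using y by force
    have ayP: "(a,y) \<in> PF" using ay QP' by auto
    have ip: "(y - Suc n, S.pc (y - Suc n)) \<in> PF" using S.cobcD(3)[OF cy] Pn by auto
    have py: "S.pc (y - Suc n) < y" using S.cobcD(7)[OF cy] .
    have ry: "Suc n \<le> y" using S.cobcD(2)[OF cy] .
    have "a < y - Suc n"
    proof (rule ccontr)
      assume "\<not> a < y - Suc n"
      then have d: "y - a \<le> Suc n" by linarith
      then have "(a,y) \<in> snd (isa_state m D (Suc n))" using PSn ayP by auto
      moreover have "(a,y) \<notin> snd (isa_state m D n)" using S.cobcD(5)[OF cy] .
      ultimately have "(a,y) \<in> S.New" using PSn' by auto
      then have "a = y - Suc n" using S.NewD by auto
      then have "(a,y) \<in> S.Cob" using cy unfolding S.cobc_def by auto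
      then show False using \<open>(a,y) \<in> S.New\<close> unfolding S.New_def by auto
    qed
    then have "(y - Suc n, S.pc (y - Suc n)) \<in> Q" using down[OF ay ip[unfolded PF_def]] py by auto
    then show "S.pc (y - Suc n) \<in> snd`Q" by force
  qed
  then show ?case using An Suc.IH Suc.prems by simp
qed

theorem mainTheorem9:
  fixes m b :: nat and D :: "rat mat" and J :: "nat \<Rightarrow> nat set"
  assumes "connection_matrix m D b J"
    and "\<forall>i<m. \<forall>j<m. D $$ (i, j) \<in> {0, 1, -1}"
    and "totally_unimodular D"
  shows "\<forall>(i, j)\<in>isa_primary_pivots m D. isa_final_matrix m D $$ (i, j) \<in> {1, -1}"
proof -
  have main: "isa_final_matrix m D $$ (i, p) \<in> {1, -1}" if ipP: "(i,p) \<in> isa_primary_pivots m D" for i p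
  proof -
  note cm = assms(1)
  define F where "F = fst (isa_state m D (m-1))"
  define PF where "PF = snd (isa_state m D (m-1))"
  interpret S: stp m "m-1" F PF using stp_all[OF cm] unfolding F_def PF_def .
  have ip: "(i,p) \<in> PF" using ipP unfolding PF_def isa_primary_pivots_def .
  have Dc: "D \<in> carrier_mat m m" using cm unfolding connection_matrix_def by auto
  define Q0 where "Q0 = {(a,c) \<in> PF. i < a \<and> c < p}"
  define Q where "Q = insert (i,p) Q0"
  have Q0P: "Q0 \<subseteq> PF" and QP: "Q \<subseteq> PF" unfolding Q0_def Q_def using ip by auto
  have PFm: "PF \<subseteq> {..<m} \<times> {..<m}" using S.Pb by fastforce
  have flow: "\<And>x y. x < m \<Longrightarrow> y < m \<Longrightarrow> (\<And>a. (a,y) \<in> PF \<Longrightarrow> a < x) \<Longrightarrow> F $$ (x,y) = 0"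
    unfolding F_def PF_def using final_low[OF cm] by blast
  have gen: "\<bar>det (submatrix D (fst`R) (snd`R))\<bar> = (\<Prod>(a,c)\<in>R. \<bar>F $$ (a,c)\<bar>)
      \<and> det (submatrix D (fst`R) (snd`R)) \<in> {0, 1, -1}"
    if RP: "R \<subseteq> PF" and down: "\<And>a c a' c'. (a,c) \<in> R \<Longrightarrow> (a',c') \<in> PF \<Longrightarrow> a < a' \<Longrightarrow> c' < c \<Longrightarrow> (a',c') \<in> R" for R
  proof
    have Rm: "R \<subseteq> {..<m} \<times> {..<m}" using RP PFm by auto
    have finR: "finite R" using Rm finite_subset by blast
    have "det (submatrix F (fst`R) (snd`R)) = det (submatrix D (fst`R) (snd`R))"
      unfolding F_def using det_inv[OF cm RP[unfolded PF_def] down[unfolded PF_def]] by simp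
    moreover have "\<bar>det (submatrix F (fst`R) (snd`R))\<bar> = (\<Prod>(a,c)\<in>R. \<bar>F $$ (a,c)\<bar>)"
    proof (rule det_pivot_prod[OF S.A finR Rm])
      show "\<forall>(a,c)\<in>R. \<forall>(a',c')\<in>R. a = a' \<longrightarrow> c = c'" using RP S.rowu by blast
      show "\<forall>(a,c)\<in>R. \<forall>(a',c')\<in>R. c = c' \<longrightarrow> a = a'" using RP S.colu by blast
      show "\<forall>(a,c)\<in>R. \<forall>(a',c')\<in>R. a < a' \<longrightarrow> F $$ (a',c) = 0"
      proof (clarify)
        fix a c a' c' assume h: "(a,c) \<in> R" "(a',c') \<in> R" "a < a'"
        have "\<And>a''. (a'',c) \<in> PF \<Longrightarrow> a'' < a'" using S.colu h RP by blast
        moreover have "a' < m" "c < m" using h Rm by auto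
        ultimately show "F $$ (a',c) = 0" using flow by blast
      qed
    qed
    ultimately show "\<bar>det (submatrix D (fst`R) (snd`R))\<bar> = (\<Prod>(a,c)\<in>R. \<bar>F $$ (a,c)\<bar>)" by simp
    have injf: "inj_on fst R" using RP S.rowu unfolding inj_on_def by (metis prod.collapse subsetD)
    have injs: "inj_on snd R" using RP S.colu unfolding inj_on_def by (metis prod.collapse subsetD)
    have cIJ: "card (fst`R) = card (snd`R)" using card_image[OF injf] card_image[OF injs] by simp
    have "fst`R \<subseteq> {0..<dim_row D}" "snd`R \<subseteq> {0..<dim_col D}" using Rm Dc by auto
    then show "det (submatrix D (fst`R) (snd`R)) \<in> {0, 1, -1}"
      using assms(3) cIJ unfolding totally_unimodular_def by blast
  qed
  have d0: "\<bar>det (submatrix D (fst`Q0) (snd`Q0))\<bar> = (\<Prod>(a,c)\<in>Q0. \<bar>F $$ (a,c)\<bar>)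
      \<and> det (submatrix D (fst`Q0) (snd`Q0)) \<in> {0, 1, -1}"
    by (rule gen[OF Q0P]) (auto simp: Q0_def)
  have d1: "\<bar>det (submatrix D (fst`Q) (snd`Q))\<bar> = (\<Prod>(a,c)\<in>Q. \<bar>F $$ (a,c)\<bar>)
      \<and> det (submatrix D (fst`Q) (snd`Q)) \<in> {0, 1, -1}"
    by (rule gen[OF QP]) (auto simp: Q_def Q0_def)
  have finQ0: "finite Q0" using Q0P PFm finite_subset by (metis finite_SigmaI finite_lessThan)
  have pnz: "(\<Prod>(a,c)\<in>Q0. \<bar>F $$ (a,c)\<bar>) \<noteq> 0"
    using finQ0 Q0P S.nz by (auto simp: prod_zero_iff)
  then have p1: "(\<Prod>(a,c)\<in>Q0. \<bar>F $$ (a,c)\<bar>) = 1" using d0 by auto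
  have "(\<Prod>(a,c)\<in>Q. \<bar>F $$ (a,c)\<bar>) = \<bar>F $$ (i,p)\<bar> * (\<Prod>(a,c)\<in>Q0. \<bar>F $$ (a,c)\<bar>)"
    unfolding Q_def using finQ0 by (subst prod.insert) (auto simp: Q0_def)
  then have "\<bar>F $$ (i,p)\<bar> \<in> {0,1}" using d1 p1 by auto
  moreover have "F $$ (i,p) \<noteq> 0" using S.nz ip by blast
  ultimately have "\<bar>F $$ (i,p)\<bar> = 1" by auto
  then show "isa_final_matrix m D $$ (i, p) \<in> {1, -1}"
    unfolding isa_final_matrix_def F_def[symmetric] by (auto simp: abs_if split: if_splits)
  qed
  then show ?thesis by blast
qed


end
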